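(* Let $\mathcal{H}=\mathcal{H}_h\oplus\mathcal{H}_h$ with basis vectors $|l,m\rangle_+$ (first copy) and $|l,m\rangle_-$ (second copy), representation $\pi=\pi_+\oplus\pi_-$ of $\mathcal{A}(S^2_q)$, and let $J$ be the antilinear operator $J|l,m\rangle_\pm=i^{2m}|l,-m\rangle_\mp$. Then $J$ does not map $\pi(\mathcal{A}(S^2_q))$ into its commutant: there exists $x\in\mathcal{A}(S^2_q)$ such that $J\pi(x)J^{-1}$ does not commute with $\pi(\mathcal{A}(S^2_q))$.
   Context: $0<q\le1$ and $[x]:=\frac{q^x-q^{-x}}{q-q^{-1}}$. $\mathcal{A}(S^2_q)$ is the $*$-algebra generated by $a,a^*,b=b^*$ with $ba=q^2ab$, $a^*b=q^2ba^*$, $a^*a+b^2=1$, $q^2aa^*+q^{-2}b^2=q^2$. $\mathcal{H}_h=\bigoplus_{l=\frac12,\frac32,\dots}V_l$, $V_l$ with orthonormal basis $|l,m\rangle$, $m=-l,\dots,l$. The representations $\pi_\pm$ on $\mathcal{H}_h$ are given by $\pi_\pm(a)|l,m\rangle=\pm(1+q^2)\frac{q^{m-\frac12}}{[2l][2l+2]}\sqrt{[l+m+1][l-m]}|l,m+1\rangle+\frac{q^{m-l-\frac12}}{[2l+2]}\sqrt{[l+m+1][l+m+2]}|l+1,m+1\rangle-\frac{q^{m+l+\frac12}}{[2l]}\sqrt{[l-m][l-m-1]}|l-1,m\rangle$, $\pi_\pm(b)|l,m\rangle=\pm\frac{[l-m+1][l+m]-q^2[l-m][l+m+1]}{[2l][2l+2]}|l,m\rangle-\frac{q^{m+1}}{[2l+2]}\sqrt{[l-m+1][l+m+1]}|l+1,m\rangle-\frac{q^{m+1}}{[2l]}\sqrt{[l-m][l+m]}|l-1,m\rangle$,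 $\pi_\pm(a^* )=\pi_\pm(a)^*$ (vectors with $|m|>l$ or $l<\frac12$ are zero). *)

theory Defs
  imports Complex_Main
begin

definition qn :: "real \<Rightarrow> real \<Rightarrow> real" where
  "qn q x = (if q = 1 then x else (q powr x - q powr (-x)) / (q - q powr (-1)))"

text \<open>Basis indices of H = H_h (+) H_h: (s, l, m) stands for |l,m>_+ if s = True and
  |l,m>_- if s = False.\<close>
type_synonym idx = "bool \<times> real \<times> real"
type_synonym vec = "idx \<Rightarrow> complex"

definition halfint_pos :: "real \<Rightarrow> bool" where
  "halfint_pos l \<longleftrightarrow> (\<exists>n::nat. l = real n + 1/2)"

definition valid :: "idx \<Rightarrow> bool" where
  "valid i \<longleftrightarrow> (case i of (s, l, m) \<Rightarrow>
      halfint_pos l \<and> \<bar>m\<bar> \<le> l \<and> l - m \<in> \<int>)"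

definition ket :: "idx \<Rightarrow> vec" where
  "ket i = (\<lambda>j. if valid i \<and> j = i then 1 else 0)"

definition Dom :: "vec set" where
  "Dom = {v. finite {j. v j \<noteq> 0} \<and> (\<forall>j. v j \<noteq> 0 \<longrightarrow> valid j)}"

definition lin_ext :: "(idx \<Rightarrow> vec) \<Rightarrow> vec \<Rightarrow> vec" where
  "lin_ext f v = (\<lambda>i. \<Sum>j\<in>{j. v j \<noteq> 0}. v j * f j i)"

definition sg :: "bool \<Rightarrow> real" where
  "sg t = (if t then 1 else -1)"

definition piA_b :: "real \<Rightarrow> idx \<Rightarrow> vec" where
  "piA_b q i = (case i of (t, l, m) \<Rightarrow> (\<lambda>j.
      complex_of_real (sg t * (1 + q^2) * q powr (m - 1/2) / (qn q (2*l) * qn q (2*l+2))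
          * sqrt (qn q (l+m+1) * qn q (l-m))) * ket (t, l, m+1) j
    + complex_of_real (q powr (m - l - 1/2) / qn q (2*l+2)
          * sqrt (qn q (l+m+1) * qn q (l+m+2))) * ket (t, l+1, m+1) j
    - complex_of_real (q powr (m + l + 1/2) / qn q (2*l)
          * sqrt (qn q (l-m) * qn q (l-m-1))) * ket (t, l-1, m) j))"

definition piB_b :: "real \<Rightarrow> idx \<Rightarrow> vec" where
  "piB_b q i = (case i of (t, l, m) \<Rightarrow> (\<lambda>j.
      complex_of_real (sg t * (qn q (l-m+1) * qn q (l+m) - q^2 * qn q (l-m) * qn q (l+m+1))
          / (qn q (2*l) * qn q (2*l+2))) * ket (t, l, m) j
    - complex_of_real (q powr (m+1) / qn q (2*l+2)
          * sqrt (qn q (l-m+1) * qn q (l+m+1))) * ket (t, l+1, m) j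
    - complex_of_real (q powr (m+1) / qn q (2*l)
          * sqrt (qn q (l-m) * qn q (l+m))) * ket (t, l-1, m) j))"

definition adj_b :: "(idx \<Rightarrow> vec) \<Rightarrow> idx \<Rightarrow> vec" where
  "adj_b f j = (\<lambda>i. if valid i then cnj (f i j) else 0)"

definition piA :: "real \<Rightarrow> vec \<Rightarrow> vec" where "piA q = lin_ext (piA_b q)"
definition piAstar :: "real \<Rightarrow> vec \<Rightarrow> vec" where "piAstar q = lin_ext (adj_b (piA_b q))"
definition piB :: "real \<Rightarrow> vec \<Rightarrow> vec" where "piB q = lin_ext (piB_b q)"

inductive_set pi_alg :: "real \<Rightarrow> (vec \<Rightarrow> vec) set" for q :: real where
  alg_id: "id \<in> pi_alg q"
| alg_a: "piA q \<in> pi_alg q"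
| alg_astar: "piAstar q \<in> pi_alg q"
| alg_b: "piB q \<in> pi_alg q"
| alg_add: "S \<in> pi_alg q \<Longrightarrow> T \<in> pi_alg q \<Longrightarrow> (\<lambda>v j. S v j + T v j) \<in> pi_alg q"
| alg_scale: "T \<in> pi_alg q \<Longrightarrow> (\<lambda>v j. c * T v j) \<in> pi_alg q"
| alg_mult: "S \<in> pi_alg q \<Longrightarrow> T \<in> pi_alg q \<Longrightarrow> S \<circ> T \<in> pi_alg q"

definition J_b :: "idx \<Rightarrow> vec" where
  "J_b i = (case i of (s, l, m) \<Rightarrow> (\<lambda>j. \<i> powi \<lfloor>2*m\<rfloor> * ket (\<not> s, l, -m) j))"

definition Jop :: "vec \<Rightarrow> vec" where
  "Jop v = (\<lambda>i. \<Sum>j\<in>{j. v j \<noteq> 0}. cnj (v j) * J_b j i)"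

definition Jinv :: "vec \<Rightarrow> vec" where
  "Jinv = inv_into Dom Jop"

end

theory Submission
  imports Defs
begin

definition flp :: "idx \<Rightarrow> idx" where "flp i = (case i of (s,l,m) \<Rightarrow> (\<not> s, l, -m))"

definition a1 :: "real \<Rightarrow> idx \<Rightarrow> complex" where
  "a1 q i = (case i of (t, l, m) \<Rightarrow> complex_of_real (sg t * (1 + q^2) * q powr (m - 1/2) / (qn q (2*l) * qn q (2*l+2))
          * sqrt (qn q (l+m+1) * qn q (l-m))))"
definition a2 :: "real \<Rightarrow> idx \<Rightarrow> complex" where
  "a2 q i = (case i of (t, l, m) \<Rightarrow> complex_of_real (q powr (m - l - 1/2) / qn q (2*l+2)
          * sqrt (qn q (l+m+1) * qn q (l+m+2))))"
definition a3 :: "real \<Rightarrow> idx \<Rightarrow> complex" where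
  "a3 q i = (case i of (t, l, m) \<Rightarrow> complex_of_real (q powr (m + l + 1/2) / qn q (2*l)
          * sqrt (qn q (l-m) * qn q (l-m-1))))"

lemma piA_b_split:
  "piA_b q j x = a1 q j * ket (case j of (t,l,m) \<Rightarrow> (t,l,m+1)) x
     + a2 q j * ket (case j of (t,l,m) \<Rightarrow> (t,l+1,m+1)) x
     - a3 q j * ket (case j of (t,l,m) \<Rightarrow> (t,l-1,m)) x"
  by (cases j) (simp add: piA_b_def a1_def a2_def a3_def)

lemma sum_ket_shift:
  assumes "finite A" "\<And>j. \<sigma> j = x \<longleftrightarrow> j = p"
  shows "(\<Sum>j\<in>A. g j * ket (\<sigma> j) x) = (if valid x \<and> p \<in> A then g p else 0)"
proof -
  have "(\<Sum>j\<in>A. g j * ket (\<sigma> j) x) = (\<Sum>j\<in>A. if j = p then (if valid x then g j else 0) else 0)"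
  proof (rule sum.cong)
    fix j assume "j \<in> A"
    show "g j * ket (\<sigma> j) x = (if j = p then (if valid x then g j else 0) else 0)"
      using assms(2)[of j] by (cases "j = p") (auto simp: ket_def)
  qed simp
  also have "\<dots> = (if valid x \<and> p \<in> A then g p else 0)"
    using assms(1) by (simp add: sum.delta)
  finally show ?thesis .
qed

lemma Dom_zero: "u \<in> Dom \<Longrightarrow> \<not> valid j \<Longrightarrow> u j = 0"
  unfolding Dom_def by blast

lemma Dom_fin: "u \<in> Dom \<Longrightarrow> finite {j. u j \<noteq> 0}"
  by (auto simp: Dom_def)

lemma sum_ket_shift_Dom:
  assumes "u \<in> Dom" "\<And>j. \<sigma> j = x \<longleftrightarrow> j = p"
  shows "(\<Sum>j\<in>{j. u j \<noteq> 0}. u j * c j * ket (\<sigma> j) x) = (if valid x then u p * c p else 0)"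
proof -
  have "(\<Sum>j\<in>{j. u j \<noteq> 0}. u j * c j * ket (\<sigma> j) x) = (if valid x \<and> p \<in> {j. u j \<noteq> 0} then u p * c p else 0)"
    by (rule sum_ket_shift[OF Dom_fin[OF assms(1)] assms(2)])
  then show ?thesis by auto
qed

lemma piA_eq:
  assumes "u \<in> Dom"
  shows "piA q u (t,l,m) = (if valid (t,l,m) then u (t,l,m-1) * a1 q (t,l,m-1)
        + u (t,l-1,m-1) * a2 q (t,l-1,m-1) - u (t,l+1,m) * a3 q (t,l+1,m) else 0)"
proof -
  let ?A = "{j. u j \<noteq> 0}"
  have "piA q u (t,l,m) = (\<Sum>j\<in>?A. u j * a1 q j * ket (case j of (t,l,m) \<Rightarrow> (t,l,m+1)) (t,l,m))
     + (\<Sum>j\<in>?A. u j * a2 q j * ket (case j of (t,l,m) \<Rightarrow> (t,l+1,m+1)) (t,l,m))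
     - (\<Sum>j\<in>?A. u j * a3 q j * ket (case j of (t,l,m) \<Rightarrow> (t,l-1,m)) (t,l,m))"
    unfolding piA_def lin_ext_def piA_b_split
    by (simp add: sum.distrib sum_subtractf algebra_simps)
  also have "\<dots> = (if valid (t,l,m) then u (t,l,m-1) * a1 q (t,l,m-1)
        + u (t,l-1,m-1) * a2 q (t,l-1,m-1) - u (t,l+1,m) * a3 q (t,l+1,m) else 0)"
    apply (subst sum_ket_shift_Dom[OF assms, where p="(t,l,m-1)"])
     apply (auto split: prod.splits)[1]
    apply (subst sum_ket_shift_Dom[OF assms, where p="(t,l-1,m-1)"])
     apply (auto split: prod.splits)[1]
    apply (subst sum_ket_shift_Dom[OF assms, where p="(t,l+1,m)"])
     apply (auto split: prod.splits)[1]
    by simp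
  finally show ?thesis .
qed

lemma Jop_eq:
  assumes "u \<in> Dom"
  shows "Jop u (s,l,m) = (if valid (s,l,m) then cnj (u (\<not> s, l, -m)) * \<i> powi \<lfloor>-2*m\<rfloor> else 0)"
proof -
  have "Jop u (s,l,m) = (\<Sum>j\<in>{j. u j \<noteq> 0}. u j * 0 + cnj (u j) * (\<i> powi \<lfloor>2 * snd (snd j)\<rfloor>) * ket (flp j) (s,l,m))"
    unfolding Jop_def J_b_def flp_def
    by (rule sum.cong) (auto split: prod.splits)
  also have "\<dots> = (\<Sum>j\<in>{j. cnj (u j) \<noteq> 0}. cnj (u j) * (\<i> powi \<lfloor>2 * snd (snd j)\<rfloor>) * ket (flp j) (s,l,m))"
    by simp
  also have "\<dots> = (if valid (s,l,m) then cnj (u (\<not> s, l, -m)) * \<i> powi \<lfloor>-2*m\<rfloor> else 0)"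
    apply (subst sum_ket_shift_Dom[where p="(\<not> s, l, -m)"])
    using assms apply (auto simp: Dom_def flp_def split: prod.splits)
    done
  finally show ?thesis .
qed

lemma phase: "cnj (\<i> powi (2*r+1)) * \<i> powi (-(2*r+1)) = -1"
proof -
  have "cnj (\<i> powi (2*r+1)) * \<i> powi (-(2*r+1)) = (-\<i>) powi (2*r+1) * (inverse \<i>) powi (2*r+1)"
    by (simp only: complex_cnj_power_int complex_cnj_i power_int_minus power_int_inverse)
  also have "\<dots> = (-1) powi (2*r+1)"
    by (simp add: power_int_mult_distrib[symmetric])
  also have "\<dots> = -1"
    by (simp add: power_int_add power_int_mult)
  finally show ?thesis .
qed

lemma valid_odd:
  assumes "valid (s,l,m)"
  obtains r :: int where "\<lfloor>2*m\<rfloor> = 2*r+1" "\<lfloor>-2*m\<rfloor> = -(2*r+1)"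
proof -
  from assms obtain n :: nat where n: "l = real n + 1/2" by (auto simp: valid_def halfint_pos_def)
  from assms have "l - m \<in> \<int>" by (auto simp: valid_def)
  then obtain z :: int where z: "l - m = of_int z" by (auto elim: Ints_cases)
  have "2*m = of_int (2*(int n - z) + 1)" using n z by simp
  then have "\<lfloor>2*m\<rfloor> = 2*(int n - z)+1" "\<lfloor>-2*m\<rfloor> = -(2*(int n - z)+1)"
    by (metis floor_of_int, metis floor_of_int mult_minus_left of_int_minus)
  then show ?thesis using that by blast
qed

lemma valid_flip: "valid (\<not> s, l, -m) \<longleftrightarrow> valid (s,l,m)"
proof -
  have *: "l + m \<in> \<int>" if "halfint_pos l" "l - m \<in> \<int>" for l m :: real
  proof -
    from that obtain n :: nat where n: "l = real n + 1/2" by (auto simp: halfint_pos_def)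
    have "l + m = of_int (2 * int n + 1) - (l - m)" using n by simp
    then show ?thesis using that(2) by (metis Ints_diff Ints_of_int)
  qed
  show ?thesis unfolding valid_def using *[of l m] *[of l "-m"] by auto
qed

lemma Dom_neg: "u \<in> Dom \<Longrightarrow> (\<lambda>x. - u x) \<in> Dom"
  by (simp add: Dom_def)

lemma Jop_Dom:
  assumes "u \<in> Dom" shows "Jop u \<in> Dom"
proof -
  have "{j. Jop u j \<noteq> 0} \<subseteq> flp ` {j. u j \<noteq> 0}"
  proof
    fix x assume "x \<in> {j. Jop u j \<noteq> 0}"
    then obtain s l m where x: "x = (s,l,m)" "Jop u (s,l,m) \<noteq> 0" by (cases x) auto
    then have "u (\<not> s, l, -m) \<noteq> 0" using Jop_eq[OF assms] by (auto split: if_splits)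
    moreover have "x = flp (\<not> s, l, -m)" using x by (simp add: flp_def)
    ultimately show "x \<in> flp ` {j. u j \<noteq> 0}" by blast
  qed
  then have "finite {j. Jop u j \<noteq> 0}" using Dom_fin[OF assms] finite_surj by blast
  moreover have "\<forall>j. Jop u j \<noteq> 0 \<longrightarrow> valid j"
    using Jop_eq[OF assms] by (auto split: if_splits)
  ultimately show ?thesis by (simp add: Dom_def)
qed

lemma piA_Dom:
  assumes "u \<in> Dom" shows "piA q u \<in> Dom"
proof -
  let ?S = "{j. u j \<noteq> 0}"
  have "{j. piA q u j \<noteq> 0} \<subseteq> (\<lambda>(t,l,m). (t,l,m+1)) ` ?S \<union> (\<lambda>(t,l,m). (t,l+1,m+1)) ` ?S \<union> (\<lambda>(t,l,m). (t,l-1,m)) ` ?S"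
  proof
    fix x assume "x \<in> {j. piA q u j \<noteq> 0}"
    then obtain t l m where x: "x = (t,l,m)" "piA q u (t,l,m) \<noteq> 0" by (cases x) auto
    then have "u (t,l,m-1) \<noteq> 0 \<or> u (t,l-1,m-1) \<noteq> 0 \<or> u (t,l+1,m) \<noteq> 0"
      using piA_eq[OF assms] by (auto split: if_splits)
    then show "x \<in> (\<lambda>(t,l,m). (t,l,m+1)) ` ?S \<union> (\<lambda>(t,l,m). (t,l+1,m+1)) ` ?S \<union> (\<lambda>(t,l,m). (t,l-1,m)) ` ?S"
    proof (elim disjE)
      assume "u (t,l,m-1) \<noteq> 0"
      then have "(t,l,m-1) \<in> ?S" by simp
      then show ?thesis using x by (auto intro!: image_eqI[where x="(t,l,m-1)"])
    next
      assume "u (t,l-1,m-1) \<noteq> 0"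
      then have "(t,l-1,m-1) \<in> ?S" by simp
      then show ?thesis using x by (auto intro!: image_eqI[where x="(t,l-1,m-1)"])
    next
      assume "u (t,l+1,m) \<noteq> 0"
      then have "(t,l+1,m) \<in> ?S" by simp
      then show ?thesis using x by (auto intro!: image_eqI[where x="(t,l+1,m)"])
    qed
  qed
  then have "finite {j. piA q u j \<noteq> 0}" using Dom_fin[OF assms] finite_subset by blast
  moreover have "\<forall>j. piA q u j \<noteq> 0 \<longrightarrow> valid j"
    using piA_eq[OF assms] by (auto split: if_splits)
  ultimately show ?thesis by (simp add: Dom_def)
qed

lemma JJ:
  assumes "u \<in> Dom" shows "Jop (\<lambda>x. - Jop u x) = u"
proof
  fix x :: idx
  obtain s l m where x: "x = (s,l,m)" by (cases x)
  show "Jop (\<lambda>x. - Jop u x) x = u x"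
  proof (cases "valid (s,l,m)")
    case True
    obtain r where r: "\<lfloor>2*m\<rfloor> = 2*r+1" "\<lfloor>-2*m\<rfloor> = -(2*r+1)" using valid_odd[OF True] by blast
    have "Jop (\<lambda>x. - Jop u x) x = - (u (s,l,m) * (cnj (\<i> powi (2*r+1)) * \<i> powi (-(2*r+1))))"
      using True r x Jop_eq[OF Dom_neg[OF Jop_Dom[OF assms]]] Jop_eq[OF assms] valid_flip[of s l m]
      by simp
    then show ?thesis using phase x by simp
  next
    case False
    then show ?thesis using x Jop_eq[OF Dom_neg[OF Jop_Dom[OF assms]]] Dom_zero[OF assms] by simp
  qed
qed

lemma Jop_inj: "inj_on Jop Dom"
proof
  fix u u' assume u: "u \<in> Dom" and u': "u' \<in> Dom" and eq: "Jop u = Jop u'"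
  show "u = u'"
  proof
    fix x :: idx
    obtain s l m where x: "x = (s,l,m)" by (cases x)
    show "u x = u' x"
    proof (cases "valid (s,l,m)")
      case True
      have "Jop u (\<not> s, l, -m) = Jop u' (\<not> s, l, -m)" using eq by simp
      then have "cnj (u (s,l,m)) * \<i> powi \<lfloor>-2*(-m)\<rfloor> = cnj (u' (s,l,m)) * \<i> powi \<lfloor>-2*(-m)\<rfloor>"
        using Jop_eq[OF u] Jop_eq[OF u'] True valid_flip[of s l m] by simp
      then have "cnj (u (s,l,m)) = cnj (u' (s,l,m))" by simp
      then show ?thesis using x by simp
    next
      case False
      then show ?thesis using x Dom_zero[OF u] Dom_zero[OF u'] by simp
    qed
  qed
qed

lemma Jinv_eq:
  assumes "u \<in> Dom" shows "Jinv u = (\<lambda>x. - Jop u x)"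
  unfolding Jinv_def
  using inv_into_f_eq[OF Jop_inj Dom_neg[OF Jop_Dom[OF assms]]] JJ[OF assms] by blast

lemma hp_pos: "halfint_pos l \<Longrightarrow> l > 0"
  by (auto simp: halfint_pos_def)

lemma hp_half: "halfint_pos (1/2)" "halfint_pos (3/2)" "halfint_pos (5/2)"
  unfolding halfint_pos_def
  by (rule exI[where x=0], simp, rule exI[where x=1], simp, rule exI[where x=2], simp)

lemma ket_Dom: "valid i \<Longrightarrow> ket i \<in> Dom"
  by (auto simp: Dom_def ket_def)

lemma qn_pos: assumes "0 < q" "q \<le> 1" "x > 0" shows "qn q x > 0"
proof (cases "q = 1")
  case True then show ?thesis using assms by (simp add: qn_def)
next
  case False
  then have q1: "q < 1" using assms by simp
  have "q powr x < 1" using powr_less_mono2[of x q 1] assms q1 by simp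
  moreover have "q powr (-x) > 1" using assms q1
    by (metis neg_less_0_iff_less powr_less_mono2_neg powr_one_eq_one)
  moreover have "q powr (-1) > 1" using assms q1
    by (metis neg_less_0_iff_less powr_less_mono2_neg powr_one_eq_one zero_less_one)
  moreover have "q < 1" by fact
  ultimately show ?thesis using False by (simp add: qn_def divide_neg_neg)
qed

lemma aux_neg: "(-1 - x) * y / d = - ((1 + x) * y / (d::real))"
proof -
  have "(-1 - x) * y = - ((1 + x) * y)" by algebra
  then show ?thesis by (simp only: minus_divide_left)
qed

theorem proposition2:
  fixes q :: real
  assumes "0 < q" and "q \<le> 1"
  shows "\<exists>T\<in>pi_alg q. \<exists>S\<in>pi_alg q. \<exists>v\<in>Dom.
           Jop (T (Jinv (S v))) \<noteq> S (Jop (T (Jinv v)))"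
proof -
  define v where "v = ket (True, 1/2, 1/2)"
  have vals: "valid (True, 1/2, 1/2)" "valid (False, 1/2, -1/2)" "valid (True, 1/2, -1/2)"
     "valid (False, 1/2, 1/2)" "valid (False, 3/2, -1/2)" "valid (True, 3/2, 1/2)"
     "valid (False, 3/2, -1/2)" "valid (True, 3/2, -1/2)"
    by (auto simp: valid_def hp_half)
  have invs: "\<not> valid (t, l, m)" if "l \<le> 0" for t l m
    using that hp_pos by (force simp: valid_def)
  have invs2: "\<not> valid (t, l, m)" if "\<bar>m\<bar> > l" for t l m
    using that by (force simp: valid_def)
  have vD: "v \<in> Dom" unfolding v_def by (rule ket_Dom[OF vals(1)])
  define Sv where "Sv = piA q v"
  have SvD: "Sv \<in> Dom" unfolding Sv_def by (rule piA_Dom[OF vD])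
  define u' where "u' = (\<lambda>x. - Jop Sv x)"
  have u'D: "u' \<in> Dom" unfolding u'_def by (rule Dom_neg[OF Jop_Dom[OF SvD]])
  have "Sv (True, 3/2, 1/2) = 0"
    unfolding Sv_def using piA_eq[OF vD] vals by (simp add: v_def ket_def)
  then have u'0: "u' (False, 3/2, -1/2) = 0"
    unfolding u'_def using Jop_eq[OF SvD] by simp
  have L0: "piA q u' (False, 1/2, -1/2) = 0"
    using piA_eq[OF u'D] u'0 Dom_zero[OF u'D] invs invs2 by simp
  have L: "Jop (piA q (Jinv Sv)) (True, 1/2, 1/2) = 0"
    using Jop_eq[OF piA_Dom[OF u'D]] L0 Jinv_eq[OF SvD] unfolding u'_def[symmetric] by simp
  define z where "z = (\<lambda>x. - Jop v x)"
  have zD: "z \<in> Dom" unfolding z_def by (rule Dom_neg[OF Jop_Dom[OF vD]])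
  define u where "u = Jop (piA q z)"
  have uD: "u \<in> Dom" unfolding u_def by (rule Jop_Dom[OF piA_Dom[OF zD]])
  have z1: "z (False, 1/2, -1/2) = - \<i>"
    unfolding z_def using Jop_eq[OF vD] vals by (simp add: v_def ket_def)
  have z2: "z (False, 3/2, 1/2) = 0" "z (False, 3/2, -3/2) = 0" "z (False, 5/2, -1/2) = 0"
    unfolding z_def using Jop_eq[OF vD] by (simp_all add: v_def ket_def)
  define c where "c = (1 + q^2) * q powr (-1) / (qn q 1 * qn q 3) * sqrt (qn q 1 * qn q 1)"
  have c0: "c \<noteq> 0" unfolding c_def using qn_pos[OF assms, of 1] qn_pos[OF assms, of 3] assms
    by (simp add: add_pos_nonneg[THEN order.strict_implies_not_eq, symmetric, of 1 "q^2"])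
  have a1F: "a1 q (False, 1/2, -(1/2)) = complex_of_real (- c)"
  proof -
    have "sg False * (1 + q^2) * q powr (-(1/2) - 1/2) / (qn q (2*(1/2)) * qn q (2*(1/2)+2))
          * sqrt (qn q (1/2 + -(1/2) + 1) * qn q (1/2 - -(1/2))) = - c"
      by (simp add: sg_def c_def aux_neg)
    then show ?thesis unfolding a1_def prod.case by (metis (no_types))
  qed
  have a1T: "a1 q (True, 1/2, -(1/2)) = complex_of_real c"
    by (simp add: a1_def sg_def c_def)
  have w1: "piA q z (False, 1/2, 1/2) = - \<i> * complex_of_real (- c)"
    using piA_eq[OF zD] z1 z2 Dom_zero[OF zD] invs vals a1F by simp
  have u1: "u (True, 1/2, -1/2) = complex_of_real c"
    unfolding u_def using Jop_eq[OF piA_Dom[OF zD]] w1 vals by (simp add: algebra_simps)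
  have w2: "piA q z (False, 3/2, -1/2) = 0"
    using piA_eq[OF zD] z2 Dom_zero[OF zD] invs invs2 by simp
  have u2: "u (True, 3/2, 1/2) = 0"
    unfolding u_def using Jop_eq[OF piA_Dom[OF zD]] w2 by simp
  have Ju: "Jop (piA q (Jinv v)) = u"
    using Jinv_eq[OF vD] unfolding u_def z_def by simp
  have R0: "piA q u (True, 1/2, 1/2) = complex_of_real (c * c)"
    using piA_eq[OF uD] u1 u2 Dom_zero[OF uD] invs vals a1T by simp
  have R: "piA q (Jop (piA q (Jinv v))) (True, 1/2, 1/2) = complex_of_real (c * c)"
    using R0 Ju by simp
  have "Jop (piA q (Jinv (piA q v))) \<noteq> piA q (Jop (piA q (Jinv v)))"
  proof
    assume "Jop (piA q (Jinv (piA q v))) = piA q (Jop (piA q (Jinv v)))"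
    then have "Jop (piA q (Jinv Sv)) (True, 1/2, 1/2) = piA q (Jop (piA q (Jinv v))) (True, 1/2, 1/2)"
      unfolding Sv_def by simp
    then show False using L R c0 by simp
  qed
  then show ?thesis using vD pi_alg.alg_a by blast
qed

end
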